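(* Let $d\ge 1$ and $s\in(0,1/2)$. For all real numbers $r_0,r_1$, \[ (r_1^2 - r_1 r_0)\,\widetilde G_s(r_0) \;\ge\; F_s(r_1)-F_s(r_0). \]
   Context: For $\rho\in\mathbb{R}$ define $F_s(\rho) := \int_0^\rho \frac{\rho-r}{(1+r^2)^{(d+1+2s)/2}}\,dr$, $G_s(\rho) := \int_0^\rho (1+r^2)^{-(d+1+2s)/2}\,dr$ (so $G_s=F_s'$), and $\widetilde G_s(\rho) := \int_0^1 (1+\rho^2 r^2)^{-(d+1+2s)/2}\,dr$, so that $\rho\,\widetilde G_s(\rho)=G_s(\rho)$. *)

theory Defs
  imports "HOL-Analysis.Analysis"
begin

definition oint0 :: "(real \<Rightarrow> real) \<Rightarrow> real \<Rightarrow> real" where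
  "oint0 f \<rho> = (if 0 \<le> \<rho> then integral {0..\<rho>} f else - integral {\<rho>..0} f)"

definition expo :: "nat \<Rightarrow> real \<Rightarrow> real" where
  "expo d s = (real d + 1 + 2 * s) / 2"

definition F_s :: "nat \<Rightarrow> real \<Rightarrow> real \<Rightarrow> real" where
  "F_s d s \<rho> = oint0 (\<lambda>r. (\<rho> - r) / (1 + r\<^sup>2) powr expo d s) \<rho>"

definition G_s :: "nat \<Rightarrow> real \<Rightarrow> real \<Rightarrow> real" where
  "G_s d s \<rho> = oint0 (\<lambda>r. (1 + r\<^sup>2) powr (- expo d s)) \<rho>"

definition Gt_s :: "nat \<Rightarrow> real \<Rightarrow> real \<Rightarrow> real" where
  "Gt_s d s \<rho> = integral {0..1} (\<lambda>r. (1 + \<rho>\<^sup>2 * r\<^sup>2) powr (- expo d s))"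

end

theory Submission
  imports Defs
begin

lemma oint0_eq:
  fixes f :: "real \<Rightarrow> real"
  assumes c: "continuous_on UNIV f" and "a \<le> y" "a \<le> 0"
  shows "oint0 f y = integral {a..y} f - integral {a..0} f"
proof (cases "0 \<le> y")
  case True
  have "integral {a..0} f + integral {0..y} f = integral {a..y} f"
    by (rule Henstock_Kurzweil_Integration.integral_combine) (use assms True integrable_continuous_real[OF continuous_on_subset[OF c subset_UNIV]] in auto)
  moreover have "oint0 f y = integral {0..y} f" using True by (simp add: oint0_def)
  ultimately show ?thesis by linarith
next
  case False
  have "integral {a..y} f + integral {y..0} f = integral {a..0} f"
    by (rule Henstock_Kurzweil_Integration.integral_combine) (use assms False integrable_continuous_real[OF continuous_on_subset[OF c subset_UNIV]] in auto)
  moreover have "oint0 f y = - integral {y..0} f" using False by (simp add: oint0_def)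
  ultimately show ?thesis by linarith
qed

lemma oint0_deriv:
  fixes f :: "real \<Rightarrow> real"
  assumes c: "continuous_on UNIV f"
  shows "(oint0 f has_real_derivative f x) (at x)"
proof -
  define a where "a = - \<bar>x\<bar> - 1"
  define b where "b = \<bar>x\<bar> + 1"
  have "a < x" "x < b" using abs_ge_self[of x] abs_ge_minus_self[of x] unfolding a_def b_def by linarith+
  have D: "((\<lambda>u. integral {a..u} f) has_vector_derivative f x) (at x within {a..b})"
    by (rule integral_has_vector_derivative, rule continuous_on_subset[OF c], simp)
       (use \<open>a < x\<close> \<open>x < b\<close> in simp)
  have "x \<in> interior {a..b}" using \<open>a < x\<close> \<open>x < b\<close> by simp
  then have "at x within {a..b} = at x" by (rule at_within_interior)
  with D have "((\<lambda>u. integral {a..u} f) has_real_derivative f x) (at x)"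
    unfolding has_real_derivative_iff_has_vector_derivative by simp
  then have "((\<lambda>u. integral {a..u} f - integral {a..0} f) has_real_derivative f x) (at x)"
    using DERIV_diff[OF _ DERIV_const[of "integral {a..0} f"]] by simp
  then show ?thesis
  proof (rule has_field_derivative_transform_within_open[where S="{a<..<b}"])
    show "x \<in> {a<..<b}" using \<open>a < x\<close> \<open>x < b\<close> by simp
    fix y assume "y \<in> {a<..<b}"
    then have "a \<le> y" by simp
    moreover have "a \<le> 0" unfolding a_def by simp
    ultimately show "integral {a..y} f - integral {a..0} f = oint0 f y"
      using oint0_eq[OF c] by simp
  qed simp
qed


definition W :: "real \<Rightarrow> real \<Rightarrow> real" where "W e r = (1 + r\<^sup>2) powr (- e)"

lemma onep: "(1::real) + r\<^sup>2 \<noteq> 0" by (smt (verit) zero_le_power2)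

lemma W_cont: "continuous_on UNIV (W e)"
  unfolding W_def by (intro continuous_intros) (auto simp: onep)

lemma W_pos: "0 < W e r"
  unfolding W_def by (simp add: onep)

lemma W_anti: assumes "0 \<le> e" "a\<^sup>2 \<le> b\<^sup>2" shows "W e b \<le> W e a"
  unfolding W_def by (rule powr_mono2') (use assms in \<open>auto simp: add_pos_nonneg\<close>)

lemma W_even: "W e (-r) = W e r" unfolding W_def by simp

lemma G_eq: "G_s d s = oint0 (W (expo d s))"
  unfolding G_s_def W_def by (rule ext) simp

lemma G_deriv: "(G_s d s has_real_derivative W (expo d s) x) (at x)"
  unfolding G_eq by (rule oint0_deriv[OF W_cont])

lemma G_0: "G_s d s 0 = 0" unfolding G_eq oint0_def by simp

lemma cont_mul: "continuous_on UNIV (\<lambda>r. r * W e r)"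
  by (intro continuous_intros W_cont[THEN continuous_on_subset]) auto

lemma F_decomp: "F_s d s \<rho> = \<rho> * G_s d s \<rho> - oint0 (\<lambda>r. r * W (expo d s) r) \<rho>"
proof -
  let ?w = "W (expo d s)"
  have eq: "(\<lambda>r. (\<rho> - r) / (1 + r\<^sup>2) powr expo d s) = (\<lambda>r. \<rho> * ?w r - r * ?w r)"
    by (rule ext) (simp add: W_def powr_minus_divide diff_divide_distrib onep)
  have i1: "?w integrable_on {a..b}" for a b
    by (rule integrable_continuous_real) (rule continuous_on_subset[OF W_cont], simp)
  have i2: "(\<lambda>r. r * ?w r) integrable_on {a..b}" for a b
    by (rule integrable_continuous_real) (rule continuous_on_subset[OF cont_mul], simp)
  have i3: "(\<lambda>r. \<rho> * ?w r) integrable_on {a..b}" for a b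
    using integrable_on_cmult_left[OF i1] by simp
  have I: "integral {a..b} (\<lambda>r. \<rho> * ?w r - r * ?w r) = \<rho> * integral {a..b} ?w - integral {a..b} (\<lambda>r. r * ?w r)" for a b
    using integral_diff[OF i3 i2, of a b] by simp
  show ?thesis unfolding F_s_def G_eq oint0_def eq I by simp
qed

lemma F_deriv: "(F_s d s has_real_derivative G_s d s x) (at x)"
proof -
  have "((\<lambda>\<rho>. \<rho> * G_s d s \<rho> - oint0 (\<lambda>r. r * W (expo d s) r) \<rho>) has_real_derivative
      (x * W (expo d s) x + 1 * G_s d s x) - x * W (expo d s) x) (at x)"
  proof (rule DERIV_diff)
    show "((\<lambda>\<rho>. \<rho> * G_s d s \<rho>) has_real_derivative x * W (expo d s) x + 1 * G_s d s x) (at x)"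
      by (rule DERIV_mult'[OF DERIV_ident G_deriv])
    show "(oint0 (\<lambda>r. r * W (expo d s) r) has_real_derivative x * W (expo d s) x) (at x)"
      using oint0_deriv[OF cont_mul, of "expo d s" x] by simp
  qed
  then show ?thesis unfolding F_decomp[abs_def] by simp
qed

lemma Gt_eq: "Gt_s d s \<rho> = integral {0..1} (\<lambda>t. W (expo d s) (\<rho> * t))"
  unfolding Gt_s_def W_def by (simp add: power_mult_distrib)

lemma Gt_mult: "\<rho> * Gt_s d s \<rho> = G_s d s \<rho>"
proof -
  let ?w = "W (expo d s)"
  have "((\<lambda>t. \<rho> * ?w (\<rho> * t)) has_integral (G_s d s (\<rho> * 1) - G_s d s (\<rho> * 0))) {0..1}"
  proof (rule fundamental_theorem_of_calculus)
    fix t :: real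
    have "((\<lambda>t. G_s d s (\<rho> * t)) has_real_derivative ?w (\<rho> * t) * \<rho>) (at t)"
      by (rule DERIV_chain2[OF G_deriv]) (auto intro!: derivative_eq_intros)
    then show "((\<lambda>t. G_s d s (\<rho> * t)) has_vector_derivative \<rho> * ?w (\<rho> * t)) (at t within {0..1})"
      by (simp add: has_real_derivative_iff_has_vector_derivative[symmetric] mult.commute
          has_field_derivative_at_within)
  qed simp
  then have H: "((\<lambda>t. \<rho> * ?w (\<rho> * t)) has_integral G_s d s \<rho>) {0..1}"
    by (simp add: G_0)
  have "integral {0..1} (\<lambda>t. \<rho> * ?w (\<rho> * t)) = G_s d s \<rho>"
    by (rule integral_unique[OF H])
  then show ?thesis unfolding Gt_eq by simp
qed

lemma Gt_ge: assumes "0 \<le> expo d s" shows "W (expo d s) r0 \<le> Gt_s d s r0"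
proof -
  let ?w = "W (expo d s)"
  have i1: "(\<lambda>t. ?w (r0 * t)) integrable_on {0..1}"
    by (rule integrable_continuous_real)
       (intro continuous_on_compose2[OF W_cont] continuous_intros, auto)
  have "integral {0..1::real} (\<lambda>t. ?w r0) \<le> integral {0..1} (\<lambda>t. ?w (r0 * t))"
  proof (rule Henstock_Kurzweil_Integration.integral_le[OF _ i1])
    show "?w r0 \<le> ?w (r0 * x)" if "x \<in> {0..1}" for x
    proof -
      from that have x1: "x\<^sup>2 \<le> 1" by (simp add: power_le_one)
      have "r0\<^sup>2 * x\<^sup>2 \<le> r0\<^sup>2 * 1" by (rule mult_left_mono[OF x1]) simp
      then have "(r0 * x)\<^sup>2 \<le> r0\<^sup>2" by (simp add: power_mult_distrib)
      then show "?w r0 \<le> ?w (r0 * x)" by (rule W_anti[OF assms])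
    qed
  qed (intro integrable_continuous_real continuous_intros)
  then show ?thesis unfolding Gt_eq by simp
qed

lemma G_odd: "G_s d s (-u) = - G_s d s u"
proof -
  have "\<forall>x. ((\<lambda>x. G_s d s x + G_s d s (-x)) has_real_derivative 0) (at x)"
  proof
    fix x
    have "((\<lambda>x. G_s d s x + G_s d s (-x)) has_real_derivative W (expo d s) x + W (expo d s) (-x) * (-1)) (at x)"
      by (intro DERIV_add G_deriv DERIV_chain2[OF G_deriv] derivative_eq_intros) auto
    then show "((\<lambda>x. G_s d s x + G_s d s (-x)) has_real_derivative 0) (at x)" by (simp add: W_even)
  qed
  from DERIV_isconst_all[OF this, of u 0] show ?thesis by (simp add: G_0)
qed

lemma F_even: "F_s d s (-u) = F_s d s u"
proof -
  have "\<forall>x. ((\<lambda>x. F_s d s x - F_s d s (-x)) has_real_derivative 0) (at x)"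
  proof
    fix x
    have "((\<lambda>x. F_s d s x - F_s d s (-x)) has_real_derivative G_s d s x - G_s d s (-x) * (-1)) (at x)"
      by (intro DERIV_diff F_deriv DERIV_chain2[OF F_deriv] derivative_eq_intros) auto
    then show "((\<lambda>x. F_s d s x - F_s d s (-x)) has_real_derivative 0) (at x)" by (simp add: G_odd)
  qed
  from DERIV_isconst_all[OF this, of "-u" u] show ?thesis by simp
qed


lemma cont_of_deriv: assumes "\<And>x. (f has_real_derivative f' x) (at x)" shows "continuous_on S f"
proof (rule continuous_at_imp_continuous_on, rule ballI)
  fix x show "isCont f x" by (rule DERIV_isCont[OF assms])
qed

lemma main_pos:
  fixes d :: nat and s r0 r1 :: real
  assumes e0: "0 \<le> expo d s" and r0: "0 \<le> r0"
  shows "(r1\<^sup>2 - r1 * r0) * Gt_s d s r0 \<ge> F_s d s r1 - F_s d s r0"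
proof -
  define w where "w = W (expo d s)"
  define G where "G = G_s d s"
  define F where "F = F_s d s"
  define g where "g = Gt_s d s r0"
  have Gd: "(G has_real_derivative w x) (at x)" for x unfolding G_def w_def by (rule G_deriv)
  have Fd: "(F has_real_derivative G x) (at x)" for x unfolding G_def F_def by (rule F_deriv)
  have wr0: "w r0 \<le> g" unfolding w_def g_def by (rule Gt_ge[OF e0])
  have wpos: "0 < w x" for x unfolding w_def by (rule W_pos)
  have g0: "0 \<le> g" using wr0 wpos[of r0] by linarith
  have gr0: "G r0 = g * r0" using Gt_mult[of r0 d s] unfolding G_def g_def by (metis mult.commute)
  have wle: "w y \<le> w x" if "0 \<le> x" "x \<le> y" for x y
    unfolding w_def by (rule W_anti[OF e0], rule power_mono) (use that in auto)
  define chi where "chi t = G t - g * t" for t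
  have chid: "(chi has_real_derivative w x - g) (at x)" for x
  proof -
    have "((\<lambda>t. G t - g * t) has_real_derivative w x - g * 1) (at x)"
      by (intro DERIV_diff Gd DERIV_cmult DERIV_ident)
    then show ?thesis unfolding chi_def[abs_def] by simp
  qed
  have chic: "continuous_on S chi" for S by (rule cont_of_deriv[OF chid])
  have chir0: "chi r0 = 0" unfolding chi_def gr0 by simp
  have chi0: "chi 0 = 0" unfolding chi_def G_def by (simp add: G_0)
  have A: "chi t \<le> 0" if "r0 \<le> t" for t
  proof -
    have "chi r0 \<ge> chi t"
    proof (rule DERIV_nonpos_imp_decreasing_open[OF that _ chic])
      fix x assume "r0 < x" "x < t"
      then have "w x \<le> w r0" using wle r0 by simp
      then show "\<exists>y. (chi has_real_derivative y) (at x) \<and> y \<le> 0" using chid wr0 by fastforce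
    qed
    then show ?thesis using chir0 by simp
  qed
  have B: "chi t \<ge> 0" if "0 \<le> t" "t \<le> r0" for t
  proof (cases "g \<le> w t")
    case True
    have "chi 0 \<le> chi t"
    proof (rule DERIV_nonneg_imp_increasing_open[OF that(1) _ chic])
      fix x assume "0 < x" "x < t"
      then have "w t \<le> w x" using wle by simp
      then show "\<exists>y. (chi has_real_derivative y) (at x) \<and> y \<ge> 0" using chid True by fastforce
    qed
    then show ?thesis using chi0 by simp
  next
    case False
    have "chi r0 \<le> chi t"
    proof (rule DERIV_nonpos_imp_decreasing_open[OF that(2) _ chic])
      fix x assume "t < x" "x < r0"
      then have "w x \<le> w t" using wle that by simp
      then show "\<exists>y. (chi has_real_derivative y) (at x) \<and> y \<le> 0" using chid False by fastforce
    qed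
    then show ?thesis using chir0 by simp
  qed
  have C: "G u \<le> g * (u + r0)" if "0 \<le> u" for u
  proof (cases "u \<le> r0")
    case True
    have "G u \<le> G r0"
    proof (rule DERIV_nonneg_imp_increasing_open[OF True _ cont_of_deriv[OF Gd]])
      fix x show "\<exists>y. (G has_real_derivative y) (at x) \<and> y \<ge> 0" using Gd wpos less_imp_le by blast
    qed
    moreover have "0 \<le> g * u" using g0 that by simp
    moreover have "g * (u + r0) = g * u + g * r0" by (simp add: distrib_left)
    ultimately show ?thesis using gr0 by linarith
  next
    case False
    then have "chi u \<le> 0" using A by simp
    moreover have "0 \<le> g * r0" using g0 r0 by simp
    moreover have "g * (u + r0) = g * u + g * r0" by (simp add: distrib_left)
    ultimately show ?thesis unfolding chi_def by linarith
  qed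
  have Godd: "G (-u) = - G u" for u unfolding G_def by (rule G_odd)
  define psi where "psi t = g * (2 * t - r0) - G t" for t
  have Fpos: "psi t \<ge> 0" if "r0 \<le> t" for t
  proof -
    have "psi t = g * (t - r0) - chi t" unfolding psi_def chi_def by (simp add: algebra_simps)
    moreover have "0 \<le> g * (t - r0)" using g0 that by simp
    ultimately show ?thesis using A[OF that] by linarith
  qed
  have Gneg: "psi t \<le> 0" if "t \<le> r0" for t
  proof (cases "0 \<le> t")
    case True
    have "psi t = g * (t - r0) - chi t" unfolding psi_def chi_def by (simp add: algebra_simps)
    moreover have "g * (t - r0) \<le> 0" using mult_nonneg_nonpos[OF g0, of "t - r0"] that by simp
    ultimately show ?thesis using B[OF True that] by simp
  next
    case False
    have "G (-t) \<le> g * (-t + r0)" using C[of "-t"] False by simp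
    then have "G t \<ge> - (g * (-t + r0))" using Godd[of t] by simp
    then have "psi t \<le> g * t" unfolding psi_def by (simp add: algebra_simps)
    also have "g * t \<le> 0" using mult_nonneg_nonpos[OF g0, of t] False by simp
    finally show ?thesis .
  qed
  define phi where "phi t = g * (t\<^sup>2 - t * r0) - F t + F r0" for t
  have phid: "(phi has_real_derivative psi x) (at x)" for x
  proof -
    have p: "((\<lambda>z. z\<^sup>2 - z * r0) has_real_derivative 2 * x - r0) (at x)"
      by (auto intro!: derivative_eq_intros)
    have "((\<lambda>z. g * (z\<^sup>2 - z * r0) - F z + F r0) has_real_derivative g * (2 * x - r0) - G x + 0) (at x)"
      by (intro DERIV_add DERIV_diff DERIV_cmult p Fd DERIV_const)
    then have "(phi has_real_derivative g * (2 * x - r0) - G x + 0) (at x)"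
      unfolding phi_def[abs_def] .
    then show ?thesis unfolding psi_def by simp
  qed
  have phic: "continuous_on S phi" for S by (rule cont_of_deriv[OF phid])
  have "phi r1 \<ge> phi r0"
  proof (cases "r0 \<le> r1")
    case True
    show ?thesis
    proof (rule DERIV_nonneg_imp_increasing_open[OF True _ phic])
      fix x assume "r0 < x" "x < r1"
      then show "\<exists>y. (phi has_real_derivative y) (at x) \<and> y \<ge> 0" using phid Fpos by fastforce
    qed
  next
    case False
    show ?thesis
    proof (rule DERIV_nonpos_imp_decreasing_open[of r1 r0 phi, OF _ _ phic])
      fix x assume "r1 < x" "x < r0"
      then show "\<exists>y. (phi has_real_derivative y) (at x) \<and> y \<le> 0" using phid Gneg by fastforce
    qed (use False in simp)
  qed
  moreover have "phi r0 = 0" unfolding phi_def by (simp add: power2_eq_square)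
  ultimately have "0 \<le> phi r1" by linarith
  moreover have "phi r1 = g * (r1\<^sup>2 - r1 * r0) - F r1 + F r0" by (rule phi_def)
  ultimately have "0 \<le> g * (r1\<^sup>2 - r1 * r0) - F r1 + F r0" by linarith
  moreover have "g * (r1\<^sup>2 - r1 * r0) = (r1\<^sup>2 - r1 * r0) * Gt_s d s r0" by (simp add: g_def mult.commute)
  ultimately show ?thesis unfolding F_def by linarith
qed

theorem mainTheorem1:
  fixes d :: nat and s r0 r1 :: real
  assumes "d \<ge> 1" and "0 < s" and "s < 1/2"
  shows "(r1\<^sup>2 - r1 * r0) * Gt_s d s r0 \<ge> F_s d s r1 - F_s d s r0"
proof -
  have e0: "0 \<le> expo d s" unfolding expo_def using assms by simp
  show ?thesis
  proof (cases "0 \<le> r0")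
    case True
    then show ?thesis by (rule main_pos[OF e0])
  next
    case False
    have "((-r1)\<^sup>2 - (-r1) * (-r0)) * Gt_s d s (-r0) \<ge> F_s d s (-r1) - F_s d s (-r0)"
      by (rule main_pos[OF e0]) (use False in simp)
    then show ?thesis by (simp add: F_even Gt_s_def)
  qed
qed

end
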